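(* Let $q$ be a prime power and $t\ge1$ an integer. In a projective space over $\mathbb{F}_q$, let $\Omega$ be a $(t-2)$-dimensional subspace, $\Gamma$ a plane skew from $\Omega$, $\bar{B}$ a non-trivial minimal blocking set of $\Gamma$, and $K$ the cone with vertex $\Omega$ and base $\bar{B}$. Then every point $P$ of $K$ not contained in $\Omega$ lies on exactly $(q^{t-1}-1)/(q-1)$ lines contained in $K$.
   Context: The cone with vertex $\Omega$ and base $\bar{B}$ is $\bigcup_{P\in\bar B}\langle P,\Omega\rangle$. A blocking set of a plane is a point set meeting every line; minimal means no proper subset does; non-trivial means it does not contain a line. *)

theory Defs
  imports "HOL-Analysis.Analysis"
begin

text \<open>A projective subspace of projective dimension d is a linear subspace of
  vector dimension d+1; points are 1-dimensional, lines 2-dimensional,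
  planes 3-dimensional linear subspaces.\<close>

definition psub :: "('k::field ^ 'n) set \<Rightarrow> nat \<Rightarrow> bool" where
  "psub W d \<longleftrightarrow> vec.subspace W \<and> vec.dim W = d"

definition is_point :: "('k::field ^ 'n) set \<Rightarrow> bool" where
  "is_point P \<longleftrightarrow> psub P 1"

definition is_line :: "('k::field ^ 'n) set \<Rightarrow> bool" where
  "is_line L \<longleftrightarrow> psub L 2"

definition points_of :: "('k::field ^ 'n) set \<Rightarrow> ('k ^ 'n) set set" where
  "points_of W = {P. is_point P \<and> P \<subseteq> W}"

definition blocking_set :: "('k::field ^ 'n) set \<Rightarrow> ('k ^ 'n) set set \<Rightarrow> bool" where
  "blocking_set Gam B \<longleftrightarrow> B \<subseteq> points_of Gam \<and>
     (\<forall>L. is_line L \<and> L \<subseteq> Gam \<longrightarrow> (\<exists>P\<in>B. P \<subseteq> L))"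

definition minimal_blocking_set :: "('k::field ^ 'n) set \<Rightarrow> ('k ^ 'n) set set \<Rightarrow> bool" where
  "minimal_blocking_set Gam B \<longleftrightarrow> blocking_set Gam B \<and>
     (\<forall>B'. B' \<subset> B \<longrightarrow> \<not> blocking_set Gam B')"

definition nontrivial_blocking_set :: "('k::field ^ 'n) set \<Rightarrow> ('k ^ 'n) set set \<Rightarrow> bool" where
  "nontrivial_blocking_set Gam B \<longleftrightarrow> blocking_set Gam B \<and>
     \<not> (\<exists>L. is_line L \<and> L \<subseteq> Gam \<and> points_of L \<subseteq> B)"

definition proj_cone :: "('k::field ^ 'n) set \<Rightarrow> ('k ^ 'n) set set \<Rightarrow> ('k ^ 'n) set set" where
  "proj_cone Omega B = (\<Union>P\<in>B. points_of (vec.span (P \<union> Omega)))"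

end

theory Submission
  imports Defs
begin


lemma sp_sub: "vec.subspace W \<Longrightarrow> x \<in> W \<Longrightarrow> vec.span {x} \<subseteq> W"
  by (simp add: vec.span_minimal)

lemma point_span: "(v::'k::{field,finite}^'n) \<noteq> 0 \<Longrightarrow> is_point (vec.span {v})"
  unfolding is_point_def psub_def
  by (simp add: vec.dim_span_eq_card_independent)

lemma point_obtain:
  assumes "is_point (R::('k::{field,finite}^'n) set)"
  obtains r where "r \<noteq> 0" "R = vec.span {r}"
proof -
  have sub: "vec.subspace R" and d: "vec.dim R = 1" using assms by (auto simp: is_point_def psub_def)
  obtain B where B: "B \<subseteq> R" "vec.independent B" "R \<subseteq> vec.span B" "card B = vec.dim R"
    using vec.basis_exists by blast
  from B(4) d have "card B = 1" by simp
  then obtain r where "B = {r}" by (rule card_1_singletonE)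
  with B sub have "r \<noteq> 0" "R = vec.span {r}"
    using vec.span_minimal[of "{r}" R] by auto
  then show ?thesis using that by blast
qed

lemma point_eq:
  assumes "is_point (R::('k::{field,finite}^'n) set)" "x \<in> R" "x \<noteq> 0"
  shows "R = vec.span {x}"
proof -
  have sub: "vec.subspace R" and d: "vec.dim R = 1" using assms by (auto simp: is_point_def psub_def)
  have "vec.span {x} \<subseteq> R" using sub assms sp_sub by blast
  moreover have "vec.dim (vec.span {x}) = 1" using point_span[OF assms(3)] by (simp add: is_point_def psub_def)
  ultimately show ?thesis using vec.subspace_dim_equal[of "vec.span {x}" R] sub d by auto
qed

lemma span_insert_span: "vec.span (insert a (vec.span S)) = vec.span (insert a S)"
proof
  show "vec.span (insert a S) \<subseteq> vec.span (insert a (vec.span S))"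
    by (intro vec.span_mono) (auto intro: vec.span_base)
  have "insert a (vec.span S) \<subseteq> vec.span (insert a S)"
    using vec.span_mono[of S "insert a S"] by (auto intro: vec.span_base)
  then show "vec.span (insert a (vec.span S)) \<subseteq> vec.span (insert a S)"
    by (simp add: vec.span_minimal)
qed

lemma line2:
  assumes "(b::'k::{field,finite}^'n) \<noteq> 0" "a \<notin> vec.span {b}"
  shows "is_line (vec.span {a, b})" "vec.independent {a,b}"
proof -
  have ab: "a \<noteq> b" using assms vec.span_base by blast
  show ind: "vec.independent {a,b}" using assms ab by (simp add: vec.independent_insert)
  show "is_line (vec.span {a, b})" unfolding is_line_def psub_def
    using vec.dim_span_eq_card_independent[OF ind] ab by simp
qed

lemma span2_mem:
  assumes "r \<in> vec.span {a, b::'k::{field,finite}^'n}"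
  obtains c d where "r = c *s a + d *s b"
proof -
  obtain c where "r - c *s a \<in> vec.span {b}" using assms vec.span_insert by blast
  then obtain d where "r - c *s a = d *s b" using vec.span_singleton by blast
  then have "r = c *s a + d *s b" by (metis add_diff_cancel_left' diff_add_cancel add.commute)
  then show ?thesis using that by blast
qed

lemma card_span_indep:
  fixes S :: "('k::{field,finite}^'n) set"
  shows "vec.independent S \<Longrightarrow> card (vec.span S) = CARD('k) ^ card S"
proof (induction S rule: finite_induct[OF finite])
  case 1
  then show ?case by simp
next
  case (2 a S)
  then have ind: "vec.independent S" and na: "a \<notin> vec.span S" by (auto simp: vec.independent_insert)
  have eq: "vec.span (insert a S) = (\<lambda>(c,y). c *s a + y) ` (UNIV \<times> vec.span S)"
  proof
    show "vec.span (insert a S) \<subseteq> (\<lambda>(c,y). c *s a + y) ` (UNIV \<times> vec.span S)"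
    proof
      fix x assume "x \<in> vec.span (insert a S)"
      then obtain k where "x - k *s a \<in> vec.span S" using vec.span_insert by blast
      then show "x \<in> (\<lambda>(c,y). c *s a + y) ` (UNIV \<times> vec.span S)"
        by (intro image_eqI[of _ _ "(k, x - k *s a)"]) auto
    qed
    show "(\<lambda>(c,y). c *s a + y) ` (UNIV \<times> vec.span S) \<subseteq> vec.span (insert a S)"
    proof (clarsimp simp: vec.span_insert)
      fix c y assume "y \<in> vec.span S"
      then show "\<exists>k. c *s a + y - k *s a \<in> vec.span S" by (rule_tac x=c in exI) simp
    qed
  qed
  have inj: "inj_on (\<lambda>(c,y). c *s a + y) (UNIV \<times> vec.span S)"
  proof (rule inj_onI, clarify)
    fix c y c' y' assume y: "y \<in> vec.span S" "y' \<in> vec.span S" and e: "c *s a + y = c' *s a + y'"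
    have "(c - c') *s a = y' - y" using e by (simp add: vec.scale_left_diff_distrib algebra_simps)
    then have "(c - c') *s a \<in> vec.span S" using y vec.span_diff by metis
    moreover have "c \<noteq> c' \<Longrightarrow> a = inverse (c - c') *s ((c - c') *s a)"
      by (metis vec.scale_scale vec.scale_one left_inverse right_minus_eq)
    ultimately have "c = c'" using na vec.span_scale by metis
    then show "c = c' \<and> y = y'" using e by simp
  qed
  have "card (vec.span (insert a S)) = card (UNIV :: 'k set) * card (vec.span S)"
    using card_image[OF inj] eq by (simp add: card_cartesian_product)
  then show ?case using 2 ind by simp
qed

lemma card_subspace:
  fixes W :: "('k::{field,finite}^'n) set"
  assumes "vec.subspace W"
  shows "card W = CARD('k) ^ vec.dim W"
proof -
  obtain B where B: "B \<subseteq> W" "vec.independent B" "W \<subseteq> vec.span B" "card B = vec.dim W"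
    using vec.basis_exists by blast
  then have "vec.span B = W" using assms vec.span_minimal by blast
  then show ?thesis using card_span_indep[OF B(2)] B(4) by simp
qed

lemma card_point:
  assumes "is_point (R::('k::{field,finite}^'n) set)"
  shows "card (R - {0}) = CARD('k) - 1"
proof -
  have "card R = CARD('k)" using card_subspace[of R] assms by (simp add: is_point_def psub_def)
  moreover have "0 \<in> R" using assms by (simp add: is_point_def psub_def vec.subspace_0)
  ultimately show ?thesis by simp
qed

lemma card_points:
  fixes W :: "('k::{field,finite}^'n) set"
  assumes W: "vec.subspace W"
  shows "card (points_of W) * (CARD('k) - 1) = CARD('k) ^ vec.dim W - 1"
proof -
  have U: "W - {0} = (\<Union>R\<in>points_of W. R - {0})"
  proof
    show "W - {0} \<subseteq> (\<Union>R\<in>points_of W. R - {0})"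
    proof
      fix x assume x: "x \<in> W - {0}"
      then have "vec.span {x} \<in> points_of W" using point_span sp_sub[OF W] by (auto simp: points_of_def)
      then show "x \<in> (\<Union>R\<in>points_of W. R - {0})" using x vec.span_base[of x "{x}"] by blast
    qed
    show "(\<Union>R\<in>points_of W. R - {0}) \<subseteq> W - {0}" by (auto simp: points_of_def)
  qed
  have "card (W - {0}) = (\<Sum>R\<in>points_of W. card (R - {0}))"
    unfolding U
  proof (rule card_UN_disjoint)
    show "\<forall>i\<in>points_of W. \<forall>j\<in>points_of W. i \<noteq> j \<longrightarrow> (i - {0}) \<inter> (j - {0}) = {}"
    proof (intro ballI impI)
      fix i j assume ij: "i \<in> points_of W" "j \<in> points_of W" "i \<noteq> j"
      show "(i - {0}) \<inter> (j - {0}) = {}"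
      proof (rule ccontr)
        assume "(i - {0}) \<inter> (j - {0}) \<noteq> {}"
        then obtain x where "x \<in> i" "x \<in> j" "x \<noteq> 0" by blast
        then have "i = vec.span {x}" "j = vec.span {x}" using point_eq ij by (auto simp: points_of_def)
        then show False using ij by simp
      qed
    qed
  qed auto
  also have "\<dots> = card (points_of W) * (CARD('k) - 1)"
    using card_point[where 'k='k and 'n='n] by (simp add: points_of_def)
  finally show ?thesis using card_subspace[OF W] W by (simp add: vec.subspace_0)
qed

lemma scale_inv_mem:
  assumes "vec.subspace S" "c *s (x::'k::{field,finite}^'n) \<in> S" "c \<noteq> 0"
  shows "x \<in> S"
proof -
  have "x = inverse c *s (c *s x)" using assms(3) by (simp add: vec.scale_scale)
  then show ?thesis using assms vec.subspace_scale by metis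
qed

lemma count_lines:
  fixes Om :: "('k::{field,finite}^'n) set"
  assumes Om: "vec.subspace Om" and pO: "p \<notin> Om"
  shows "card {L. is_line L \<and> vec.span {p} \<subseteq> L \<and> L \<subseteq> vec.span (insert p Om)} = card (points_of Om)"
proof -
  let ?A = "{L. is_line L \<and> vec.span {p} \<subseteq> L \<and> L \<subseteq> vec.span (insert p Om)}"
  let ?f = "\<lambda>R. vec.span (insert p R)"
  let ?g = "\<lambda>L. L \<inter> Om"
  have p0: "p \<noteq> 0" using pO Om vec.subspace_0 by blast
  have a: "?f R \<in> ?A \<and> ?g (?f R) = R" if R: "R \<in> points_of Om" for R
  proof -
    obtain r where r: "r \<noteq> 0" "R = vec.span {r}" using R point_obtain by (auto simp: points_of_def)
    have RO: "R \<subseteq> Om" using R by (simp add: points_of_def)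
    have pr: "p \<notin> vec.span {r}" using RO r pO by blast
    have "?f R = vec.span {p, r}" using r span_insert_span by simp
    then have l: "is_line (?f R)" using line2(1)[OF r(1) pr] by simp
    have "vec.span {p} \<subseteq> ?f R" by (rule vec.span_mono) auto
    moreover have "?f R \<subseteq> vec.span (insert p Om)" using RO by (intro vec.span_mono) auto
    moreover have "?g (?f R) = R"
    proof
      show "R \<subseteq> ?g (?f R)" using RO vec.span_superset[of "insert p R"] by auto
      show "?g (?f R) \<subseteq> R"
      proof
        fix y assume y: "y \<in> ?g (?f R)"
        then obtain k where k: "y - k *s p \<in> vec.span R" using vec.span_insert by blast
        have sR: "vec.span R = R" using R by (simp add: points_of_def is_point_def psub_def)
        have "k *s p = y - (y - k *s p)" by simp
        moreover have "y \<in> Om" using y by simp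
        moreover have "y - k *s p \<in> Om" using k sR RO by blast
        ultimately have "k *s p \<in> Om" using vec.subspace_diff[OF Om] by metis
        then have "k = 0" using scale_inv_mem[OF Om] pO by blast
        then show "y \<in> R" using k sR by simp
      qed
    qed
    ultimately show ?thesis using l by simp
  qed
  have b: "?g L \<in> points_of Om \<and> ?f (?g L) = L" if L: "L \<in> ?A" for L
  proof -
    have Ll: "is_line L" and PL: "vec.span {p} \<subseteq> L" and LW: "L \<subseteq> vec.span (insert p Om)"
      using L by auto
    have Ls: "vec.subspace L" and Ld: "vec.dim L = 2" using Ll by (auto simp: is_line_def psub_def)
    have pL: "p \<in> L" using PL vec.span_base by blast
    have "\<not> L \<subseteq> vec.span {p}"
    proof
      assume "L \<subseteq> vec.span {p}"
      then have "vec.dim L \<le> vec.dim (vec.span {p})" by (rule vec.dim_subset)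
      then show False using Ld point_span[OF p0] by (simp add: is_point_def psub_def)
    qed
    then obtain x where xL: "x \<in> L" and xP: "x \<notin> vec.span {p}" by blast
    obtain k where "x - k *s p \<in> vec.span Om" using LW xL vec.span_insert by blast
    then have wO: "x - k *s p \<in> Om" using Om vec.span_eq_iff by blast
    define w where "w = x - k *s p"
    have wO': "w \<in> Om" using wO w_def by simp
    have wL: "w \<in> L" unfolding w_def using vec.subspace_diff[OF Ls xL vec.subspace_scale[OF Ls pL]] by simp
    have w0: "w \<noteq> 0"
    proof
      assume "w = 0"
      then have "x = k *s p" by (simp add: w_def)
      then show False using xP vec.span_singleton by auto
    qed
    have pw: "p \<notin> vec.span {w}" using sp_sub[OF Om wO'] pO by blast
    have sp: "vec.span {p, w} = L"
    proof (rule vec.subspace_dim_equal)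
      show "vec.span {p, w} \<subseteq> L" by (rule vec.span_minimal) (use pL wL Ls in auto)
      show "vec.dim L \<le> vec.dim (vec.span {p, w})" using line2(1)[OF w0 pw] Ld
        by (simp add: is_line_def psub_def)
    qed (use Ls in auto)
    have gL: "?g L = vec.span {w}"
    proof
      show "vec.span {w} \<subseteq> ?g L" using sp_sub[OF Om wO'] sp_sub[OF Ls wL] by blast
      show "?g L \<subseteq> vec.span {w}"
      proof
        fix y assume y: "y \<in> ?g L"
        then obtain c d where cd: "y = c *s p + d *s w" using sp span2_mem by blast
        have "c *s p = y - d *s w" using cd by simp
        moreover have "y \<in> Om" using y by simp
        ultimately have "c *s p \<in> Om" using vec.subspace_diff[OF Om _ vec.subspace_scale[OF Om wO']] by metis
        then have "c = 0" using scale_inv_mem[OF Om] pO by blast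
        then show "y \<in> vec.span {w}" using cd vec.span_singleton by auto
      qed
    qed
    have "?g L \<in> points_of Om" using gL point_span[OF w0] sp_sub[OF Om wO'] by (simp add: points_of_def)
    moreover have "?f (?g L) = L" using gL span_insert_span[of p "{w}"] sp by simp
    ultimately show ?thesis by simp
  qed
  have "bij_betw ?g ?A (points_of Om)"
    by (rule bij_betw_byWitness[where f'="?f"]) (use a b in auto)
  then show ?thesis by (rule bij_betw_same_card)
qed

theorem lemma5p9:
  fixes Omega Gam :: "('k::{field,finite} ^ 'n) set"
    and B :: "('k ^ 'n) set set"
    and t :: nat
  assumes "t \<ge> 1"
    and "psub Omega (t - 1)"
    and "psub Gam 3"
    and "Omega \<inter> Gam = {0}"
    and "minimal_blocking_set Gam B"
    and "nontrivial_blocking_set Gam B"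
    and "P \<in> proj_cone Omega B"
    and "\<not> P \<subseteq> Omega"
  shows "card {L. is_line L \<and> P \<subseteq> L \<and> points_of L \<subseteq> proj_cone Omega B}
           = (CARD('k) ^ (t - 1) - 1) div (CARD('k) - 1)"
proof -
  let ?K = "proj_cone Omega B"
  have Om: "vec.subspace Omega" and Omd: "vec.dim Omega = t - 1" using assms(2) by (auto simp: psub_def)
  have Ga: "vec.subspace Gam" using assms(3) by (auto simp: psub_def)
  have Bp: "Q \<in> B \<Longrightarrow> is_point Q \<and> Q \<subseteq> Gam" for Q
    using assms(5) by (auto simp: minimal_blocking_set_def blocking_set_def points_of_def)
  obtain Q0 where Q0: "Q0 \<in> B" "P \<in> points_of (vec.span (Q0 \<union> Omega))"
    using assms(7) by (auto simp: proj_cone_def)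
  then obtain p where p: "p \<noteq> 0" "P = vec.span {p}" using point_obtain by (auto simp: points_of_def)
  have pO: "p \<notin> Omega" using sp_sub[OF Om] p assms(8) by blast
  have dec: "\<exists>Q\<in>B. \<exists>g\<in>Q. \<exists>w\<in>Omega. v = g + w" if vK: "vec.span {v} \<in> ?K" for v
  proof -
    obtain Q where Q: "Q \<in> B" "vec.span {v} \<in> points_of (vec.span (Q \<union> Omega))"
      using vK by (auto simp: proj_cone_def)
    then have "v \<in> vec.span (Q \<union> Omega)" using vec.span_base[of v "{v}"] by (auto simp: points_of_def)
    then have "v \<in> {x + y |x y. x \<in> vec.span Q \<and> y \<in> vec.span Omega}" by (simp only: vec.span_Un)
    then obtain g w where "v = g + w" "g \<in> vec.span Q" "w \<in> vec.span Omega" by blast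
    moreover have "vec.span Q = Q" using Bp[OF Q(1)] by (simp add: is_point_def psub_def)
    moreover have "vec.span Omega = Omega" using Om by simp
    ultimately show ?thesis using Q(1) by metis
  qed
  have uniq: "g = g'" if "g \<in> Gam" "g' \<in> Gam" "w \<in> Omega" "w' \<in> Omega" "g + w = g' + w'" for g g' w w'
  proof -
    have "g - g' = w' - w" using that(5) by (simp add: algebra_simps)
    moreover have "g - g' \<in> Gam" using that Ga vec.subspace_diff by blast
    moreover have "w' - w \<in> Omega" using that Om vec.subspace_diff by blast
    ultimately have "g - g' \<in> Omega \<inter> Gam" by simp
    then show ?thesis using assms(4) by simp
  qed
  have char: "points_of L \<subseteq> ?K \<longleftrightarrow> L \<subseteq> vec.span (insert p Omega)"
    if Ll: "is_line L" and PL: "P \<subseteq> L" for L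
  proof
    assume LW: "L \<subseteq> vec.span (insert p Omega)"
    have "p \<in> vec.span (Q0 \<union> Omega)" using Q0(2) p vec.span_base[of p "{p}"] by (auto simp: points_of_def)
    then have "insert p Omega \<subseteq> vec.span (Q0 \<union> Omega)" using vec.span_superset[of "Q0 \<union> Omega"] by auto
    then have "vec.span (insert p Omega) \<subseteq> vec.span (Q0 \<union> Omega)" by (simp add: vec.span_minimal)
    then have "points_of L \<subseteq> points_of (vec.span (Q0 \<union> Omega))" using LW by (auto simp: points_of_def)
    then show "points_of L \<subseteq> ?K" using Q0(1) by (auto simp: proj_cone_def)
  next
    assume LK: "points_of L \<subseteq> ?K"
    show "L \<subseteq> vec.span (insert p Omega)"
    proof (rule ccontr)
      assume "\<not> L \<subseteq> vec.span (insert p Omega)"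
      then obtain x where xL: "x \<in> L" and xW: "x \<notin> vec.span (insert p Omega)" by blast
      have Ls: "vec.subspace L" using Ll by (simp add: is_line_def psub_def)
      have inK: "vec.span {v} \<in> ?K" if "v \<in> L" "v \<noteq> 0" for v
        using LK point_span[OF that(2)] sp_sub[OF Ls that(1)] by (auto simp: points_of_def)
      have pL: "p \<in> L" using PL p vec.span_base[of p "{p}"] by auto
      have x0: "x \<noteq> 0" using xW vec.span_zero by metis
      obtain Qp gp wp where gp: "Qp \<in> B" "gp \<in> Qp" "wp \<in> Omega" "p = gp + wp"
        using dec[OF inK[OF pL p(1)]] by blast
      obtain Qx gx wx where gx: "Qx \<in> B" "gx \<in> Qx" "wx \<in> Omega" "x = gx + wx"
        using dec[OF inK[OF xL x0]] by blast
      have gpG: "gp \<in> Gam" and gxG: "gx \<in> Gam" using Bp gp gx by auto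
      have lin: "a *s p + b *s x = (a *s gp + b *s gx) + (a *s wp + b *s wx)" for a b
        using gp(4) gx(4) by (simp add: vec.scale_right_distrib algebra_simps)
      have wab: "a *s wp + b *s wx \<in> Omega" for a b
        using vec.subspace_add[OF Om vec.subspace_scale[OF Om gp(3)] vec.subspace_scale[OF Om gx(3)]] by simp
      have ind: "a = 0 \<and> b = 0" if ab: "a *s gp + b *s gx = 0" for a b
      proof -
        have e: "a *s p + b *s x \<in> Omega" using lin[of a b] ab wab by simp
        have b0: "b = 0"
        proof (rule ccontr)
          assume "b \<noteq> 0"
          have "b *s x = (a *s p + b *s x) - a *s p" by simp
          moreover have "a *s p + b *s x \<in> vec.span (insert p Omega)"
            using e vec.span_superset[of "insert p Omega"] by auto
          moreover have "a *s p \<in> vec.span (insert p Omega)"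
            by (intro vec.span_scale vec.span_base) simp
          ultimately have "b *s x \<in> vec.span (insert p Omega)" by (metis vec.span_diff)
          then show False using scale_inv_mem[OF vec.subspace_span] \<open>b \<noteq> 0\<close> xW by blast
        qed
        then have "a *s p \<in> Omega" using e by simp
        then have "a = 0" using scale_inv_mem[OF Om] pO by blast
        then show ?thesis using b0 by simp
      qed
      have gx0: "gx \<noteq> 0"
      proof
        assume "gx = 0"
        then have "0 *s gp + 1 *s gx = 0" by simp
        from ind[OF this] show False by simp
      qed
      have gpn: "gp \<notin> vec.span {gx}"
      proof
        assume "gp \<in> vec.span {gx}"
        then obtain c where "gp = c *s gx" using vec.span_singleton by blast
        then have "1 *s gp + (- c) *s gx = 0" by simp
        from ind[OF this] show False by simp
      qed
      define M where "M = vec.span {gp, gx}"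
      have Ml: "is_line M" using line2(1)[OF gx0 gpn] M_def by simp
      have MG: "M \<subseteq> Gam" unfolding M_def by (rule vec.span_minimal) (use gpG gxG Ga in auto)
      have MB: "points_of M \<subseteq> B"
      proof
        fix R assume R: "R \<in> points_of M"
        obtain r where r: "r \<noteq> 0" "R = vec.span {r}" using R point_obtain by (auto simp: points_of_def)
        have rM: "r \<in> M" using R r vec.span_base[of r "{r}"] by (auto simp: points_of_def)
        then obtain c d where cd: "r = c *s gp + d *s gx" using span2_mem M_def by blast
        have rG: "r \<in> Gam" using rM MG by blast
        define v where "v = c *s p + d *s x"
        have vL: "v \<in> L" unfolding v_def using vec.subspace_add[OF Ls vec.subspace_scale[OF Ls pL] vec.subspace_scale[OF Ls xL]] by simp
        have vr: "v = r + (c *s wp + d *s wx)" using lin cd v_def by simp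
        have v0: "v \<noteq> 0"
        proof
          assume "v = 0"
          then have "r + (c *s wp + d *s wx) = 0 + 0" using vr by simp
          then show False using uniq[OF rG vec.subspace_0[OF Ga] wab vec.subspace_0[OF Om]] r by simp
        qed
        obtain Q g w where Q: "Q \<in> B" "g \<in> Q" "w \<in> Omega" "v = g + w" using dec[OF inK[OF vL v0]] by blast
        have gG: "g \<in> Gam" using Q Bp by blast
        have "r = g" using uniq[OF rG gG wab Q(3)] Q(4) vr by simp
        then have "Q = R" using point_eq[of Q r] Q Bp r by auto
        then show "R \<in> B" using Q by simp
      qed
      show False using assms(6) Ml MG MB by (auto simp: nontrivial_blocking_set_def)
    qed
  qed
  have seteq: "{L. is_line L \<and> P \<subseteq> L \<and> points_of L \<subseteq> ?K}
      = {L. is_line L \<and> vec.span {p} \<subseteq> L \<and> L \<subseteq> vec.span (insert p Omega)}"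
  proof (rule Collect_cong)
    fix L
    show "(is_line L \<and> P \<subseteq> L \<and> points_of L \<subseteq> ?K) = (is_line L \<and> vec.span {p} \<subseteq> L \<and> L \<subseteq> vec.span (insert p Omega))"
      using char[of L] p(2) by auto
  qed
  have q2: "CARD('k) \<ge> 2"
  proof -
    have "{0, 1::'k} \<subseteq> UNIV" by simp
    then have "card {0, 1::'k} \<le> CARD('k)" by (rule card_mono[OF finite])
    then show ?thesis by simp
  qed
  have "card (points_of Omega) * (CARD('k) - 1) = CARD('k) ^ (t - 1) - 1"
    using card_points[OF Om] Omd by simp
  then have "card (points_of Omega) = (CARD('k) ^ (t - 1) - 1) div (CARD('k) - 1)"
  proof -
    have "CARD('k) - 1 \<noteq> 0" using q2 by simp
    then show ?thesis using \<open>card (points_of Omega) * (CARD('k) - 1) = _\<close> by (metis nonzero_mult_div_cancel_right)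
  qed
  then show ?thesis using seteq count_lines[OF Om pO] by simp
qed

end
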